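(* Let $K\subseteq\mathbb{R}^{n}$ be compact and let $T\subseteq\mathbb{R}^{n}$ be compact with non-empty interior. Then \[ \lim_{\delta\to0^{+}}N^{*}(K,T+\delta B_{2}^{n})=N^{*}(K,T). \]
   Context: $B_2^n$ is the closed Euclidean unit ball. $\mathcal{B}_{+}^{n}$ is the set of non-negative regular Borel measures on $\mathbb{R}^n$; $(\mu*\mathbbm{1}_S)(x)=\int\mathbbm{1}_S(x-y)\,d\mu(y)$ with $\mathbbm{1}_S$ the indicator of $S$. $N^{*}(K,S)=\inf\{\mu(\mathbb{R}^n):\mu\in\mathcal{B}_+^n,\ \mu*\mathbbm{1}_S\ge\mathbbm{1}_K\}$. *)

theory Defs
  imports "HOL-Analysis.Analysis"
begin

definition regular_borel_measure :: "'a::euclidean_space measure \<Rightarrow> bool" where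
  "regular_borel_measure M \<longleftrightarrow>
     sets M = sets borel \<and>
     (\<forall>A\<in>sets borel.
        emeasure M A = (INF U\<in>{U. open U \<and> A \<subseteq> U}. emeasure M U) \<and>
        emeasure M A = (SUP C\<in>{C. compact C \<and> C \<subseteq> A}. emeasure M C))"

definition frac_cover_number :: "'a::euclidean_space set \<Rightarrow> 'a set \<Rightarrow> ennreal" where
  "frac_cover_number K S =
     (INF M\<in>{M. regular_borel_measure M \<and>
               (\<forall>x. (indicator K x :: ennreal) \<le> (\<integral>\<^sup>+ y. indicator S (x - y) \<partial>M))}.
        emeasure M (space M))"

end

theory Submission
  imports Defs "HOL-Library.Diagonal_Subsequence"
begin


definition stack :: "'a set \<Rightarrow> ('a \<Rightarrow> real) \<Rightarrow> real \<Rightarrow> ('a \<Rightarrow> real) \<Rightarrow> bool" where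
  "stack S v b s \<longleftrightarrow> (\<forall>p\<in>S. \<forall>p'\<in>S. p \<noteq> p' \<longrightarrow> {s p..<s p + v p} \<inter> {s p'..<s p' + v p'} = {})
      \<and> (\<Union>p\<in>S. {s p..<s p + v p}) = {b..<b + sum v S}"

lemma stack_cong: "(\<And>p. p \<in> S \<Longrightarrow> s p = s' p) \<Longrightarrow> stack S v b s = stack S v b s'"
  unfolding stack_def by (simp cong: SUP_cong)

lemma stack_exists:
  assumes "finite S" "\<forall>p\<in>S. 0 \<le> v p"
  shows "\<exists>s. stack S v b s"
  using assms
proof (induction S rule: finite_induct)
  case empty
  show ?case by (simp add: stack_def)
next
  case (insert x F)
  then obtain s where s: "stack F v b s" by auto
  define s' where "s' = s(x := b + sum v F)"
  have sub: "{s p..<s p + v p} \<subseteq> {b..<b + sum v F}" if "p \<in> F" for p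
    using s that unfolding stack_def by blast
  have eq: "s' p = s p" if "p \<in> F" for p using that insert.hyps(2) by (auto simp: s'_def)
  have "stack (insert x F) v b s'"
    unfolding stack_def
  proof (intro conjI ballI impI)
    fix p p' assume p: "p \<in> insert x F" and p': "p' \<in> insert x F" and ne: "p \<noteq> p'"
    show "{s' p..<s' p + v p} \<inter> {s' p'..<s' p' + v p'} = {}"
    proof (cases "p = x")
      case True
      then have "p' \<in> F" using p' ne by auto
      with sub[OF this] eq[OF this] True show ?thesis by (auto simp: s'_def)
    next
      case False
      then have pF: "p \<in> F" using p by auto
      show ?thesis
      proof (cases "p' = x")
        case True
        with sub[OF pF] eq[OF pF] show ?thesis by (auto simp: s'_def)
      next
        case False
        then have "p' \<in> F" using p' by auto
        with pF ne s eq show ?thesis unfolding stack_def by auto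
      qed
    qed
  next
    have "(\<Union>p\<in>insert x F. {s' p..<s' p + v p}) = {b + sum v F..<b + sum v F + v x} \<union> (\<Union>p\<in>F. {s p..<s p + v p})"
      using eq by (auto simp: s'_def)
    also have "\<dots> = {b + sum v F..<b + sum v F + v x} \<union> {b..<b + sum v F}"
      using s by (simp add: stack_def)
    also have "\<dots> = {b..<b + sum v (insert x F)}"
    proof -
      have "0 \<le> sum v F" using insert by (auto intro: sum_nonneg)
      moreover have "0 \<le> v x" using insert by auto
      ultimately show ?thesis using insert.hyps by auto
    qed
    finally show "(\<Union>p\<in>insert x F. {s' p..<s' p + v p}) = {b..<b + sum v (insert x F)}" .
  qed
  then show ?case by blast
qed

primrec tstart :: "(nat \<Rightarrow> 'a set) \<Rightarrow> (nat \<Rightarrow> 'a \<Rightarrow> 'a) \<Rightarrow> (nat \<Rightarrow> 'a \<Rightarrow> real) \<Rightarrow> nat \<Rightarrow> 'a \<Rightarrow> real" where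
  "tstart Q q w 0 = (SOME s. stack (Q 0) (w 0) 0 s)"
| "tstart Q q w (Suc m) = (\<lambda>p'. (SOME s. stack {p''\<in>Q (Suc m). q m p'' = q m p'} (w (Suc m)) (tstart Q q w m (q m p')) s) p')"

locale dtree =
  fixes Q :: "nat \<Rightarrow> 'a::euclidean_space set" and q :: "nat \<Rightarrow> 'a \<Rightarrow> 'a"
    and w :: "nat \<Rightarrow> 'a \<Rightarrow> real" and c :: real
  assumes finQ: "finite (Q m)" and qQ: "p \<in> Q (Suc m) \<Longrightarrow> q m p \<in> Q m"
    and wnn: "0 \<le> w m p"
    and cons: "p \<in> Q m \<Longrightarrow> w m p = sum (w (Suc m)) {p'\<in>Q (Suc m). q m p' = p}"
    and qdist: "p \<in> Q (Suc m) \<Longrightarrow> dist (q m p) p \<le> c / 2^m"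
    and cnn: "0 \<le> c"
begin

abbreviation "M0 \<equiv> sum (w 0) (Q 0)"
definition "st = tstart Q q w"
definition "I m p = {st m p..<st m p + w m p}"
definition "Ym m u = (\<Sum>p\<in>Q m. indicator (I m p) u *\<^sub>R p)"

abbreviation "ch m p \<equiv> {p''\<in>Q (Suc m). q m p'' = p}"

lemma stack0: "stack (Q 0) (w 0) 0 (st 0)"
proof -
  have "\<exists>s. stack (Q 0) (w 0) 0 s" by (rule stack_exists) (auto simp: finQ wnn)
  then show ?thesis unfolding st_def by (simp add: someI_ex)
qed

lemma stack_child: "stack (ch m p) (w (Suc m)) (st m p) (st (Suc m))"
proof -
  define \<sigma> where "\<sigma> = (SOME s. stack (ch m p) (w (Suc m)) (st m p) s)"
  have "\<exists>s. stack (ch m p) (w (Suc m)) (st m p) s" by (rule stack_exists) (auto simp: finQ wnn)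
  then have "stack (ch m p) (w (Suc m)) (st m p) \<sigma>" unfolding \<sigma>_def by (rule someI_ex)
  moreover have "st (Suc m) p' = \<sigma> p'" if "p' \<in> ch m p" for p'
    using that by (simp add: st_def \<sigma>_def)
  ultimately show ?thesis using stack_cong[of "ch m p" "st (Suc m)" \<sigma>] by simp
qed

lemma nest: assumes "p' \<in> Q (Suc m)" shows "I (Suc m) p' \<subseteq> I m (q m p')"
proof -
  let ?p = "q m p'"
  have "p' \<in> ch m ?p" using assms by simp
  then have "I (Suc m) p' \<subseteq> {st m ?p..<st m ?p + sum (w (Suc m)) (ch m ?p)}"
    using stack_child[of m ?p] unfolding stack_def I_def by blast
  also have "\<dots> = I m ?p" using cons[OF qQ[OF assms]] by (simp add: I_def)
  finally show ?thesis .
qed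

lemma inv: "(\<forall>p\<in>Q m. \<forall>p'\<in>Q m. p\<noteq>p' \<longrightarrow> I m p \<inter> I m p' = {}) \<and> (\<Union>p\<in>Q m. I m p) = {0..<M0}"
proof (induction m)
  case 0
  then show ?case using stack0 unfolding stack_def I_def by simp
next
  case (Suc m)
  have disj: "I (Suc m) p \<inter> I (Suc m) p' = {}" if "p \<in> Q (Suc m)" "p' \<in> Q (Suc m)" "p \<noteq> p'" for p p'
  proof (cases "q m p = q m p'")
    case True
    then have "p \<in> ch m (q m p)" "p' \<in> ch m (q m p)" using that by auto
    then show ?thesis using stack_child[of m "q m p"] that unfolding stack_def I_def by blast
  next
    case False
    then have "I m (q m p) \<inter> I m (q m p') = {}" using Suc qQ that by blast
    then show ?thesis using nest[OF that(1)] nest[OF that(2)] by blast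
  qed
  have "(\<Union>p\<in>Q (Suc m). I (Suc m) p) = (\<Union>p\<in>Q m. \<Union>p'\<in>ch m p. I (Suc m) p')"
    using qQ by blast
  also have "\<dots> = (\<Union>p\<in>Q m. I m p)"
  proof (intro SUP_cong refl)
    fix p assume "p \<in> Q m"
    show "(\<Union>p'\<in>ch m p. I (Suc m) p') = I m p"
      using stack_child[of m p] cons[OF \<open>p \<in> Q m\<close>] unfolding stack_def I_def by simp
  qed
  also have "\<dots> = {0..<M0}" using Suc by simp
  finally show ?case using disj by blast
qed

lemma Ym_eq: assumes "p \<in> Q m" "u \<in> I m p" shows "Ym m u = p"
proof -
  have "Ym m u = indicator (I m p) u *\<^sub>R p + (\<Sum>p'\<in>Q m - {p}. indicator (I m p') u *\<^sub>R p')"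
    unfolding Ym_def using sum.remove[OF finQ assms(1), of "\<lambda>p'. indicator (I m p') u *\<^sub>R p'"] by simp
  also have "(\<Sum>p'\<in>Q m - {p}. indicator (I m p') u *\<^sub>R p') = 0"
  proof (rule sum.neutral, rule ballI)
    fix p' assume "p' \<in> Q m - {p}"
    then have "u \<notin> I m p'" using inv[of m] assms by blast
    then show "indicator (I m p') u *\<^sub>R p' = 0" by simp
  qed
  finally show ?thesis using assms by simp
qed

lemma Ym_out: assumes "u \<notin> {0..<M0}" shows "Ym m u = 0"
proof -
  have "u \<notin> I m p" if "p \<in> Q m" for p using inv[of m] assms that by blast
  then show ?thesis unfolding Ym_def by (intro sum.neutral) auto
qed

lemma Ym_in: assumes "u \<in> {0..<M0}" shows "Ym m u \<in> Q m" "u \<in> I m (Ym m u)"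
proof -
  obtain p where "p \<in> Q m" "u \<in> I m p" using inv[of m] assms by blast
  then show "Ym m u \<in> Q m" "u \<in> I m (Ym m u)" using Ym_eq by auto
qed

lemma Ym_step: assumes "u \<in> {0..<M0}" shows "Ym m u = q m (Ym (Suc m) u)"
proof -
  have "u \<in> I m (q m (Ym (Suc m) u))" using nest[OF Ym_in(1)[OF assms]] Ym_in(2)[OF assms] by blast
  then show ?thesis using Ym_eq qQ Ym_in(1)[OF assms] by blast
qed

lemma Ym_dist: assumes "u \<in> {0..<M0}" shows "dist (Ym (m + j) u) (Ym m u) \<le> 2*c/2^m - 2*c/2^(m+j)"
proof (induction j)
  case 0 then show ?case by simp
next
  case (Suc j)
  have "dist (Ym (m + Suc j) u) (Ym m u) \<le> dist (Ym (Suc (m + j)) u) (Ym (m + j) u) + dist (Ym (m + j) u) (Ym m u)"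
    by (simp add: dist_triangle)
  also have "dist (Ym (Suc (m + j)) u) (Ym (m + j) u) \<le> c / 2^(m+j)"
    using qdist[OF Ym_in(1)[OF assms, of "Suc (m+j)"]] Ym_step[OF assms, of "m+j"]
    by (simp add: dist_commute)
  moreover have "c/2^(m+j) + (2*c/2^m - 2*c/2^(m+j)) = 2*c/2^m - 2*c/2^(m+Suc j)"
    by (simp add: field_simps)
  ultimately show ?case using Suc by linarith
qed

lemma Ym_dist': assumes "u \<in> {0..<M0}" "m \<le> j" shows "dist (Ym j u) (Ym m u) \<le> 2*c/2^m"
proof -
  have "dist (Ym (m + (j - m)) u) (Ym m u) \<le> 2*c/2^m - 2*c/2^(m+(j-m))" by (rule Ym_dist[OF assms(1)])
  moreover have "0 \<le> 2*c/2^(m+(j-m))" using cnn by simp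
  ultimately show ?thesis using assms by simp
qed

lemma Ym_conv: "convergent (\<lambda>j. Ym j u)"
proof (cases "u \<in> {0..<M0}")
  case False
  then show ?thesis using Ym_out by (simp add: convergent_const)
next
  case True
  have "Cauchy (\<lambda>j. Ym j u)"
  proof (rule metric_CauchyI)
    fix e :: real assume "0 < e"
    obtain m where m: "4*c/2^m < e"
    proof -
      have "(\<lambda>m. 4*c / 2^m) \<longlonglongrightarrow> 0"
        by (intro tendsto_divide_0[OF tendsto_const]) (simp add: filterlim_realpow_sequentially_gt1)
      then have "eventually (\<lambda>m. 4*c/2^m < e) sequentially" using \<open>0<e\<close> by (rule order_tendstoD)
      then show ?thesis using that by (auto simp: eventually_sequentially)
    qed
    show "\<exists>M. \<forall>j\<ge>M. \<forall>n\<ge>M. dist (Ym j u) (Ym n u) < e"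
    proof (intro exI allI impI)
      fix j n assume "m \<le> j" "m \<le> n"
      have "dist (Ym j u) (Ym n u) \<le> dist (Ym j u) (Ym m u) + dist (Ym n u) (Ym m u)"
        by (rule dist_triangle2)
      also have "\<dots> \<le> 2*c/2^m + 2*c/2^m" using Ym_dist'[OF True] \<open>m \<le> j\<close> \<open>m \<le> n\<close> by (intro add_mono) auto
      finally show "dist (Ym j u) (Ym n u) < e" using m by simp
    qed
  qed
  then show ?thesis by (simp add: Cauchy_convergent_iff)
qed

definition "Y u = lim (\<lambda>j. Ym j u)"

lemma Ym_lim: "(\<lambda>j. Ym j u) \<longlonglongrightarrow> Y u"
  using Ym_conv unfolding Y_def by (simp add: convergent_LIMSEQ_iff)

lemma Y_dist: assumes "u \<in> {0..<M0}" shows "dist (Y u) (Ym m u) \<le> 2*c/2^m"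
proof -
  have "(\<lambda>j. dist (Ym j u) (Ym m u)) \<longlonglongrightarrow> dist (Y u) (Ym m u)"
    by (intro tendsto_dist Ym_lim tendsto_const)
  moreover have "eventually (\<lambda>j. dist (Ym j u) (Ym m u) \<le> 2*c/2^m) sequentially"
    using Ym_dist'[OF assms] by (auto simp: eventually_sequentially)
  ultimately show ?thesis by (rule tendsto_upperbound) simp
qed

lemma Ym_meas: "Ym m \<in> borel_measurable borel"
  unfolding Ym_def I_def by measurable

lemma Y_meas: "Y \<in> borel_measurable borel"
  by (rule borel_measurable_LIMSEQ_metric[OF Ym_meas Ym_lim])

lemma Ym_measure: "emeasure lborel {u\<in>{0..<M0}. Ym m u \<in> A} = ennreal (sum (w m) (Q m \<inter> A))"
proof -
  have eq: "{u\<in>{0..<M0}. Ym m u \<in> A} = (\<Union>p\<in>Q m \<inter> A. I m p)"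
  proof safe
    fix u assume u: "u \<in> {0..<M0}" "Ym m u \<in> A"
    then show "u \<in> (\<Union>p\<in>Q m \<inter> A. I m p)" using Ym_in[OF u(1)] by blast
  next
    fix u p assume "p \<in> Q m" "p \<in> A" "u \<in> I m p"
    then show "u \<in> {0..<M0}" "Ym m u \<in> A" using inv[of m] Ym_eq by blast+
  qed
  have "emeasure lborel (\<Union>p\<in>Q m \<inter> A. I m p) = (\<Sum>p\<in>Q m \<inter> A. emeasure lborel (I m p))"
  proof (rule sum_emeasure[symmetric])
    show "disjoint_family_on (I m) (Q m \<inter> A)"
      using inv[of m] unfolding disjoint_family_on_def by blast
  qed (auto simp: I_def finQ)
  also have "\<dots> = (\<Sum>p\<in>Q m \<inter> A. ennreal (w m p))"
    by (intro sum.cong refl) (simp add: I_def wnn)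
  also have "\<dots> = ennreal (sum (w m) (Q m \<inter> A))"
    by (rule sum_ennreal) (simp add: wnn)
  finally show ?thesis using eq by simp
qed

end





definition dq :: "nat \<Rightarrow> 'a::euclidean_space \<Rightarrow> 'a" where
  "dq m y = (\<Sum>i\<in>Basis. (of_int \<lfloor>2^m * (y \<bullet> i)\<rfloor> / 2^m) *\<^sub>R i)"

lemma dq_inner: "i \<in> Basis \<Longrightarrow> dq m y \<bullet> i = of_int \<lfloor>2^m * (y \<bullet> i)\<rfloor> / 2^m"
  unfolding dq_def by (simp add: inner_sum_left inner_Basis if_distrib cong: if_cong)

lemma floor_half: "\<lfloor>real_of_int \<lfloor>x\<rfloor> / 2\<rfloor> = \<lfloor>x / 2\<rfloor>" for x :: real
proof -
  have a: "\<lfloor>real_of_int \<lfloor>x\<rfloor> / 2\<rfloor> = \<lfloor>x\<rfloor> div 2"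
    using floor_divide_of_int_eq[of "\<lfloor>x\<rfloor>" 2] by simp
  show ?thesis unfolding a
  proof (rule floor_unique[symmetric])
    have "real_of_int (\<lfloor>x\<rfloor> div 2) \<le> real_of_int \<lfloor>x\<rfloor> / 2"
      using real_of_int_div4[of "\<lfloor>x\<rfloor>" 2] by simp
    then show "real_of_int (\<lfloor>x\<rfloor> div 2) \<le> x / 2" by linarith
    have "\<lfloor>x\<rfloor> \<le> 2 * (\<lfloor>x\<rfloor> div 2) + 1" by presburger
    then have "real_of_int \<lfloor>x\<rfloor> + 1 \<le> 2 * real_of_int (\<lfloor>x\<rfloor> div 2) + 2" by linarith
    then show "x / 2 < real_of_int (\<lfloor>x\<rfloor> div 2) + 1" by linarith
  qed
qed

lemma dq_dq: "dq m (dq (Suc m) y) = (dq m y :: 'a::euclidean_space)"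
  unfolding dq_def[of m]
proof (intro sum.cong refl)
  fix i :: 'a assume i: "i \<in> Basis"
  have "2^m * (dq (Suc m) y \<bullet> i) = real_of_int \<lfloor>2^Suc m * (y \<bullet> i)\<rfloor> / 2"
    by (simp add: dq_inner[OF i])
  then have "\<lfloor>2^m * (dq (Suc m) y \<bullet> i)\<rfloor> = \<lfloor>2^Suc m * (y \<bullet> i) / 2\<rfloor>"
    by (simp only: floor_half)
  also have "\<dots> = \<lfloor>2^m * (y \<bullet> i)\<rfloor>" by simp
  finally show "(of_int \<lfloor>2^m * (dq (Suc m) y \<bullet> i)\<rfloor> / 2^m) *\<^sub>R i = (of_int \<lfloor>2^m * (y \<bullet> i)\<rfloor> / 2^m) *\<^sub>R i"
    by simp
qed

lemma dq_dist: "dist (dq m y) y \<le> DIM('a) / 2^m" for y :: "'a::euclidean_space"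
proof -
  have "dist (dq m y) y = norm (dq m y - y)" by (simp add: dist_norm)
  also have "\<dots> \<le> (\<Sum>i\<in>Basis. \<bar>(dq m y - y) \<bullet> i\<bar>)" by (rule norm_le_l1)
  also have "\<dots> \<le> (\<Sum>i\<in>(Basis::'a set). 1 / 2^m)"
  proof (intro sum_mono)
    fix i :: 'a assume i: "i \<in> Basis"
    define t where "t = y \<bullet> i"
    have "(dq m y - y) \<bullet> i = of_int \<lfloor>2^m * t\<rfloor> / 2^m - t"
      by (simp add: inner_diff_left dq_inner[OF i] t_def)
    also have "\<dots> = (of_int \<lfloor>2^m * t\<rfloor> - 2^m * t) / 2^m" by (simp add: field_simps)
    finally have eq: "(dq m y - y) \<bullet> i = (of_int \<lfloor>2^m * t\<rfloor> - 2^m * t) / 2^m" .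
    have "\<bar>of_int \<lfloor>2^m * t\<rfloor> - 2^m * t\<bar> \<le> 1" by linarith
    then show "\<bar>(dq m y - y) \<bullet> i\<bar> \<le> 1 / 2^m" unfolding eq by (simp add: abs_div divide_right_mono)
  qed
  also have "\<dots> = DIM('a) / 2^m" by simp
  finally show ?thesis .
qed


lemma dq_meas: "dq m \<in> borel_measurable (borel :: 'a::euclidean_space measure)"
  unfolding dq_def by measurable

lemma dq_finite: assumes "bounded R" shows "finite (dq m ` (R :: 'a::euclidean_space set))"
proof -
  obtain B where B: "\<And>y. y \<in> R \<Longrightarrow> norm y \<le> B" using assms by (auto simp: bounded_iff)
  define N :: int where "N = \<lceil>2^m * B\<rceil> + 1"
  define g :: "('a \<Rightarrow> int) \<Rightarrow> 'a" where "g f = (\<Sum>i\<in>Basis. (of_int (f i) / 2^m) *\<^sub>R i)" for f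
  have "dq m ` R \<subseteq> g ` (Basis \<rightarrow>\<^sub>E {-N..N})"
  proof
    fix z assume "z \<in> dq m ` R"
    then obtain y where y: "y \<in> R" "z = dq m y" by auto
    define f where "f = (\<lambda>i\<in>Basis. \<lfloor>2^m * (y \<bullet> i)\<rfloor>)"
    have "f \<in> Basis \<rightarrow>\<^sub>E {-N..N}"
    proof
      fix i :: 'a assume i: "i \<in> Basis"
      have "\<bar>y \<bullet> i\<bar> \<le> B" using Basis_le_norm[OF i, of y] B[OF y(1)] by simp
      then have "\<bar>2^m * (y \<bullet> i)\<bar> \<le> 2^m * B" by (simp add: abs_mult)
      then show "f i \<in> {-N..N}" unfolding f_def N_def using i
        by (simp, linarith)
    qed (simp add: f_def)
    moreover have "z = g f" unfolding y g_def dq_def f_def by (intro sum.cong refl) simp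
    ultimately show "z \<in> g ` (Basis \<rightarrow>\<^sub>E {-N..N})" by blast
  qed
  moreover have "finite (g ` (Basis \<rightarrow>\<^sub>E {-N..N}))" by (intro finite_imageI finite_PiE) auto
  ultimately show ?thesis by (rule finite_subset)
qed


definition thick :: "'a::euclidean_space set \<Rightarrow> real \<Rightarrow> 'a set" where
  "thick T r = {z. \<exists>t\<in>T. dist z t \<le> r}"

lemma thick_infdist: assumes "compact T" "T \<noteq> {}" shows "z \<in> thick T r \<longleftrightarrow> infdist z T \<le> r"
proof
  assume "z \<in> thick T r" then show "infdist z T \<le> r" unfolding thick_def using infdist_le2 by blast
next
  assume "infdist z T \<le> r"
  moreover obtain t where "t \<in> T" "infdist z T = dist z t"
    using infdist_attains_inf[OF compact_imp_closed[OF assms(1)] assms(2)] by blast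
  ultimately show "z \<in> thick T r" unfolding thick_def by auto
qed

lemma thick_closed: assumes "compact T" shows "closed (thick T r)"
proof (cases "T = {}")
  case True then show ?thesis by (simp add: thick_def)
next
  case False
  then have "thick T r = {z. infdist z T \<le> r}" using thick_infdist[OF assms] by blast
  then show ?thesis by (simp add: closed_Collect_le continuous_on_infdist continuous_on_const continuous_on_id)
qed

lemma thick_add: "z \<in> thick T a \<Longrightarrow> dist z z' \<le> b \<Longrightarrow> z' \<in> thick T (a + b)"
proof -
  assume z: "z \<in> thick T a" and d: "dist z z' \<le> b"
  then obtain t where t: "t \<in> T" "dist z t \<le> a" unfolding thick_def by auto
  have "dist z' t \<le> dist z z' + dist z t" by (rule dist_triangle3)
  then have "dist z' t \<le> a + b" using t d by linarith
  then show ?thesis using t unfolding thick_def by auto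
qed

lemma thick_mono: "a \<le> b \<Longrightarrow> thick T a \<subseteq> thick T b"
  unfolding thick_def by (auto intro: order_trans)

lemma thick_lim: assumes "compact T" "\<And>m. z \<in> thick T (a + e m)" "e \<longlonglongrightarrow> 0"
  shows "z \<in> thick T a"
proof -
  have ne: "T \<noteq> {}" using assms(2)[of 0] unfolding thick_def by auto
  have "infdist z T \<le> a + e m" for m using assms(2) thick_infdist[OF assms(1) ne] by blast
  moreover have "(\<lambda>m. a + e m) \<longlonglongrightarrow> a" using tendsto_add[OF tendsto_const assms(3)] by simp
  ultimately have "infdist z T \<le> a" by (intro tendsto_lowerbound) (auto intro: always_eventually)
  then show ?thesis using thick_infdist[OF assms(1) ne] by blast
qed

lemma thick_zero: "closed T \<Longrightarrow> thick T 0 = T"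
  unfolding thick_def by auto

lemma thick_eq: assumes "0 < \<delta>"
  shows "{t + \<delta> *\<^sub>R b | t b. t \<in> T \<and> b \<in> cball 0 1} = thick T \<delta>"
proof safe
  fix t b assume "t \<in> T" "b \<in> cball (0::'a) 1"
  then show "t + \<delta> *\<^sub>R b \<in> thick T \<delta>" unfolding thick_def using assms
    by (intro CollectI bexI[of _ t]) (auto simp: dist_norm)
next
  fix z assume "z \<in> thick T \<delta>"
  then obtain t where t: "t \<in> T" "dist z t \<le> \<delta>" unfolding thick_def by auto
  define b where "b = (1/\<delta>) *\<^sub>R (z - t)"
  have "z = t + \<delta> *\<^sub>R b" using assms by (simp add: b_def)
  have "norm b = dist z t / \<delta>" using assms by (simp add: b_def dist_norm)
  also have "\<dots> \<le> 1" using assms t by simp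
  finally have "b \<in> cball 0 1" by simp
  show "\<exists>t b. z = t + \<delta> *\<^sub>R b \<and> t \<in> T \<and> b \<in> cball 0 1" using t \<open>z = _\<close> \<open>b \<in> _\<close> by blast
qed





lemma fcn_mono: assumes "S \<subseteq> S'" shows "frac_cover_number K S' \<le> frac_cover_number K S"
  unfolding frac_cover_number_def
proof (rule INF_superset_mono)
  show "{M. regular_borel_measure M \<and> (\<forall>x. indicator K x \<le> \<integral>\<^sup>+ y. indicator S (x - y) \<partial>M)}
     \<subseteq> {M. regular_borel_measure M \<and> (\<forall>x. indicator K x \<le> \<integral>\<^sup>+ y. indicator S' (x - y) \<partial>M)}"
  proof safe
    fix M :: "'a measure" and x assume "\<forall>x. indicator K x \<le> \<integral>\<^sup>+ y. indicator S (x - y) \<partial>M"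
    then have "indicator K x \<le> \<integral>\<^sup>+ y. indicator S (x - y) \<partial>M" by blast
    also have "\<dots> \<le> \<integral>\<^sup>+ y. indicator S' (x - y) \<partial>M"
      using assms by (intro nn_integral_mono) (auto simp: indicator_def)
    finally show "indicator K x \<le> \<integral>\<^sup>+ y. indicator S' (x - y) \<partial>M" .
  qed
qed simp

lemma fcn_le: assumes "regular_borel_measure M" "\<And>x. indicator K x \<le> \<integral>\<^sup>+ y. indicator S (x - y) \<partial>M"
  shows "frac_cover_number K S \<le> emeasure M (space M)"
  unfolding frac_cover_number_def using assms by (intro INF_lower) auto

lemma finite_regular:
  fixes M :: "'a::euclidean_space measure"
  assumes "sets M = sets borel" "emeasure M (space M) \<noteq> \<infinity>"
  shows "regular_borel_measure M"
  unfolding regular_borel_measure_def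
proof (intro conjI ballI assms(1))
  fix A :: "'a set" assume A: "A \<in> sets borel"
  show "emeasure M A = (INF U\<in>{U. open U \<and> A \<subseteq> U}. emeasure M U)"
    using outer_regular[OF assms A] by (simp add: conj_commute)
  show "emeasure M A = (SUP C\<in>{C. compact C \<and> C \<subseteq> A}. emeasure M C)"
    using inner_regular[OF assms A] by (simp add: conj_commute)
qed

lemma cover_emeasure:
  fixes M :: "'a::euclidean_space measure"
  assumes "sets M = sets borel" "closed S"
  shows "(\<integral>\<^sup>+ y. indicator S (x - y) \<partial>M) = emeasure M {y. x - y \<in> S}"
proof -
  have [measurable]: "S \<in> sets borel" using assms(2) by simp
  have "{y. x - y \<in> S} \<in> sets M" unfolding assms(1) by measurable
  moreover have "(\<lambda>y. indicator S (x - y) :: ennreal) = indicator {y. x - y \<in> S}"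
    by (auto simp: indicator_def)
  ultimately show ?thesis by simp
qed




lemma thick_compact: assumes "compact T" shows "compact (thick T r)"
proof -
  obtain B where B: "\<And>t. t \<in> T \<Longrightarrow> norm t \<le> B" using compact_imp_bounded[OF assms] by (auto simp: bounded_iff)
  have "thick T r \<subseteq> cball 0 (B + r)"
  proof
    fix z assume "z \<in> thick T r"
    then obtain t where "t \<in> T" "dist z t \<le> r" unfolding thick_def by auto
    then have "norm z \<le> norm t + r" using norm_triangle_ineq2[of z t] by (simp add: dist_norm)
    then show "z \<in> cball 0 (B + r)" using B[OF \<open>t \<in> T\<close>] by simp
  qed
  then have "bounded (thick T r)" using bounded_cball bounded_subset by blast
  then show ?thesis using thick_closed[OF assms] by (simp add: compact_eq_bounded_closed)
qed

locale approx =
  fixes K T :: "'a::euclidean_space set" and \<mu> :: "nat \<Rightarrow> 'a measure" and Lr :: real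
  assumes cK: "compact K" and cT: "compact T"
    and sets_mu: "sets (\<mu> k) = sets borel"
    and mass: "emeasure (\<mu> k) (space (\<mu> k)) \<le> ennreal (Lr + inverse (real (Suc k)))"
    and cov: "indicator K x \<le> \<integral>\<^sup>+ y. indicator (thick T (inverse (real (Suc k)))) (x - y) \<partial>\<mu> k"
    and Lr_nn: "0 \<le> Lr"
begin

definition "R = {x - z | x z. x \<in> K \<and> z \<in> thick T 1}"
definition "Q m = dq m ` R"
definition "wk k m p = measure (\<mu> k) (R \<inter> dq m -` {p})"

lemma space_mu: "space (\<mu> k) = UNIV"
  using sets_eq_imp_space_eq[OF sets_mu] by simp

lemma R_compact: "compact R"
  unfolding R_def by (rule compact_differences[OF cK thick_compact[OF cT]])

lemma R_sets[measurable]: "R \<in> sets borel"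
  using R_compact by (simp add: compact_imp_closed)

lemma memR: "x \<in> K \<Longrightarrow> x - y \<in> thick T 1 \<Longrightarrow> y \<in> R"
  unfolding R_def by (rule CollectI, rule exI[of _ x], rule exI[of _ "x - y"]) simp

lemma finQ: "finite (Q m)"
  unfolding Q_def by (rule dq_finite[OF compact_imp_bounded[OF R_compact]])

lemma qQ: "p \<in> Q (Suc m) \<Longrightarrow> dq m p \<in> Q m"
proof -
  assume "p \<in> Q (Suc m)"
  then obtain y where "y \<in> R" "p = dq (Suc m) y" unfolding Q_def by auto
  then show ?thesis unfolding Q_def using dq_dq[of m y] by auto
qed

lemma finmu: "emeasure (\<mu> k) A \<noteq> top"
proof -
  have "emeasure (\<mu> k) A \<le> emeasure (\<mu> k) (space (\<mu> k))" by (rule emeasure_space)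
  also have "\<dots> \<le> ennreal (Lr + inverse (real (Suc k)))" by (rule mass)
  finally show ?thesis by (auto simp: top_unique)
qed

lemma setsR[measurable]: "R \<inter> dq m -` {p} \<in> sets (\<mu> k)"
  unfolding sets_mu using dq_meas[of m] by measurable

lemma wk_nn: "0 \<le> wk k m p" by (simp add: wk_def)

lemma wk_le: "wk k m p \<le> Lr + 1"
proof -
  have "emeasure (\<mu> k) (R \<inter> dq m -` {p}) \<le> ennreal (Lr + inverse (real (Suc k)))"
    using emeasure_space[of "\<mu> k"] mass[of k] order_trans by blast
  also have "\<dots> \<le> ennreal (Lr + 1)" by (intro ennreal_leI) (simp add: field_simps)
  finally have 1: "emeasure (\<mu> k) (R \<inter> dq m -` {p}) \<le> ennreal (Lr + 1)" .
  have 2: "emeasure (\<mu> k) (R \<inter> dq m -` {p}) = ennreal (wk k m p)"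
    unfolding wk_def by (rule emeasure_eq_ennreal_measure[OF finmu])
  have "ennreal (wk k m p) \<le> ennreal (Lr + 1)" using 1 2 by simp
  moreover have "0 \<le> Lr + 1" using Lr_nn by simp
  ultimately show ?thesis using ennreal_le_iff by blast
qed

lemma wk_cons: assumes "p \<in> Q m"
  shows "wk k m p = sum (wk k (Suc m)) {p'\<in>Q (Suc m). dq m p' = p}"
proof -
  have eq: "R \<inter> dq m -` {p} = (\<Union>p'\<in>{p'\<in>Q (Suc m). dq m p' = p}. R \<inter> dq (Suc m) -` {p'})"
  proof (intro equalityI subsetI)
    fix y assume "y \<in> R \<inter> dq m -` {p}"
    then show "y \<in> (\<Union>p'\<in>{p'\<in>Q (Suc m). dq m p' = p}. R \<inter> dq (Suc m) -` {p'})"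
      unfolding Q_def using dq_dq[of m y] by blast
  next
    fix y assume "y \<in> (\<Union>p'\<in>{p'\<in>Q (Suc m). dq m p' = p}. R \<inter> dq (Suc m) -` {p'})"
    then show "y \<in> R \<inter> dq m -` {p}" using dq_dq[of m y] by auto
  qed
  show ?thesis unfolding wk_def eq
    by (rule measure_finite_Union) (auto simp: finQ finmu disjoint_family_on_def)
qed

lemma wk_total: "sum (wk k 0) (Q 0) \<le> Lr + inverse (real (Suc k))"
proof -
  have Req: "R = (\<Union>p\<in>Q 0. R \<inter> dq 0 -` {p})" unfolding Q_def by blast
  have "measure (\<mu> k) (\<Union>p\<in>Q 0. R \<inter> dq 0 -` {p}) = sum (wk k 0) (Q 0)"
    unfolding wk_def by (rule measure_finite_Union) (auto simp: finQ finmu disjoint_family_on_def)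
  then have "sum (wk k 0) (Q 0) = measure (\<mu> k) R" by (subst Req) simp
  also have "\<dots> \<le> Lr + inverse (real (Suc k))"
  proof -
    have "emeasure (\<mu> k) R \<le> ennreal (Lr + inverse (real (Suc k)))"
      using emeasure_space[of "\<mu> k" R] mass[of k] order_trans by blast
    then have "ennreal (measure (\<mu> k) R) \<le> ennreal (Lr + inverse (real (Suc k)))"
      by (simp only: emeasure_eq_ennreal_measure[OF finmu])
    then show ?thesis using Lr_nn ennreal_le_iff[of "Lr + inverse (real (Suc k))"] by simp
  qed
  finally show ?thesis .
qed

lemma wk_cov: assumes "x \<in> K"
  shows "1 \<le> sum (wk k m) {p\<in>Q m. x - p \<in> thick T (inverse (real (Suc k)) + real DIM('a) / 2^m)}"
proof -
  let ?d = "inverse (real (Suc k))"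
  let ?A = "{p\<in>Q m. x - p \<in> thick T (?d + real DIM('a) / 2^m)}"
  have "1 \<le> (\<integral>\<^sup>+ y. indicator (thick T ?d) (x - y) \<partial>\<mu> k)" using cov[of x k] assms by simp
  also have "\<dots> = emeasure (\<mu> k) {y. x - y \<in> thick T ?d}"
    by (rule cover_emeasure[OF sets_mu thick_closed[OF cT]])
  also have "\<dots> \<le> emeasure (\<mu> k) (\<Union>p\<in>?A. R \<inter> dq m -` {p})"
  proof (rule emeasure_mono)
    show "{y. x - y \<in> thick T ?d} \<subseteq> (\<Union>p\<in>?A. R \<inter> dq m -` {p})"
    proof
      fix y assume y: "y \<in> {y. x - y \<in> thick T ?d}"
      have "?d \<le> 1" by (simp add: field_simps)
      then have yR: "y \<in> R" using y thick_mono[of ?d 1 T] memR[OF assms] by blast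
      have "dist (x - y) (x - dq m y) \<le> real DIM('a) / 2^m"
        using dq_dist[of m y] by (simp add: dist_norm norm_minus_commute)
      then have "x - dq m y \<in> thick T (?d + real DIM('a) / 2^m)" using y thick_add by blast
      then show "y \<in> (\<Union>p\<in>?A. R \<inter> dq m -` {p})" using yR unfolding Q_def by blast
    qed
  next
    show "(\<Union>p\<in>?A. R \<inter> dq m -` {p}) \<in> sets (\<mu> k)" by (intro sets.finite_UN setsR) (simp add: finQ)
  qed
  also have "\<dots> = ennreal (sum (wk k m) ?A)"
  proof -
    have "emeasure (\<mu> k) (\<Union>p\<in>?A. R \<inter> dq m -` {p}) = ennreal (measure (\<mu> k) (\<Union>p\<in>?A. R \<inter> dq m -` {p}))"
      by (rule emeasure_eq_ennreal_measure[OF finmu])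
    also have "measure (\<mu> k) (\<Union>p\<in>?A. R \<inter> dq m -` {p}) = sum (wk k m) ?A"
      unfolding wk_def by (rule measure_finite_Union) (auto simp: finQ finmu disjoint_family_on_def)
    finally show ?thesis .
  qed
  finally show ?thesis by simp
qed

end




context approx
begin

definition "Ix = (SIGMA m:UNIV. Q m)"
definition "fs k j = (case from_nat_into Ix j of (m, p) \<Rightarrow> wk k m p)"

lemma Ix_countable: "countable Ix"
  unfolding Ix_def by (intro countable_SIGMA) (auto intro: countable_finite finQ)

lemma fs_bounded: "bounded (range (\<lambda>k. fs (s k) j))"
proof -
  have "norm (fs k j) \<le> Lr + 1" for k
    unfolding fs_def using wk_nn wk_le by (auto split: prod.split)
  then show ?thesis unfolding bounded_iff by blast
qed

lemma diag_exists: "\<exists>r. strict_mono r \<and> (\<forall>j. convergent (\<lambda>k. fs (r k) j))"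
proof -
  interpret subseqs "\<lambda>j s. convergent (\<lambda>k. fs (s k) j)"
  proof
    fix j and s :: "nat \<Rightarrow> nat" assume "strict_mono s"
    obtain l r where "strict_mono r" "((\<lambda>k. fs (s k) j) \<circ> r) \<longlonglongrightarrow> l"
      using bounded_imp_convergent_subsequence[OF fs_bounded[of s j]] by blast
    then show "\<exists>r'. strict_mono r' \<and> convergent (\<lambda>k. fs ((s \<circ> r') k) j)"
      by (intro exI[of _ r]) (auto simp: convergent_def o_def)
  qed
  have c1: "convergent (\<lambda>k. fs ((diagseq \<circ> (+) (Suc j)) k) j)" for j
  proof (rule diagseq_holds)
    fix r s n assume "strict_mono (r :: nat \<Rightarrow> nat)" "convergent (\<lambda>k. fs (s k) n)"
    then show "convergent (\<lambda>k. fs ((s \<circ> r) k) n)"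
      using convergent_subseq_convergent[of "\<lambda>k. fs (s k) n" r] by (simp add: o_def)
  qed
  have eqf: "(\<lambda>k. fs ((diagseq \<circ> (+) (Suc j)) k) j) = (\<lambda>k. fs (diagseq (k + Suc j)) j)" for j
  proof (rule ext)
    fix k have "Suc j + k = k + Suc j" by (rule add.commute)
    then show "fs ((diagseq \<circ> (+) (Suc j)) k) j = fs (diagseq (k + Suc j)) j" by (simp only: comp_apply)
  qed
  have "convergent (\<lambda>k. fs (diagseq (k + Suc j)) j)" for j
    by (subst eqf[symmetric]) (rule c1)
  then have "convergent (\<lambda>k. fs (diagseq k) j)" for j
    using convergent_ignore_initial_segment[of "\<lambda>k. fs (diagseq k) j" "Suc j"] by simp
  then show ?thesis using subseq_diagseq by blast
qed

definition "rr = (SOME r. strict_mono r \<and> (\<forall>j. convergent (\<lambda>k. fs (r k) j)))"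

lemma rr: "strict_mono rr" "convergent (\<lambda>k. fs (rr k) j)"
  using someI_ex[OF diag_exists] unfolding rr_def[symmetric] by auto

definition "wl m p = (if p \<in> Q m then lim (\<lambda>k. wk (rr k) m p) else 0)"

lemma wl_lim: assumes "p \<in> Q m" shows "(\<lambda>k. wk (rr k) m p) \<longlonglongrightarrow> wl m p"
proof -
  have mem: "(m, p) \<in> Ix" using assms by (simp add: Ix_def)
  have "fs k (to_nat_on Ix (m, p)) = wk k m p" for k
    unfolding fs_def using from_nat_into_to_nat_on[OF Ix_countable mem] by simp
  then have "convergent (\<lambda>k. wk (rr k) m p)" using rr(2)[of "to_nat_on Ix (m, p)"] by simp
  then show ?thesis using assms by (simp add: wl_def convergent_LIMSEQ_iff)
qed

lemma wl_nn: "0 \<le> wl m p"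
proof (cases "p \<in> Q m")
  case True
  show ?thesis by (rule LIMSEQ_le_const[OF wl_lim[OF True]]) (simp add: wk_nn)
qed (simp add: wl_def)

lemma wl_cons: assumes "p \<in> Q m" shows "wl m p = sum (wl (Suc m)) {p'\<in>Q (Suc m). dq m p' = p}"
proof -
  have "(\<lambda>k. sum (wk (rr k) (Suc m)) {p'\<in>Q (Suc m). dq m p' = p}) \<longlonglongrightarrow> sum (wl (Suc m)) {p'\<in>Q (Suc m). dq m p' = p}"
    by (intro tendsto_sum wl_lim) simp
  then have "(\<lambda>k. wk (rr k) m p) \<longlonglongrightarrow> sum (wl (Suc m)) {p'\<in>Q (Suc m). dq m p' = p}"
    using wk_cons[OF assms] by simp
  then show ?thesis using wl_lim[OF assms] LIMSEQ_unique by blast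
qed

lemma wl_total: "sum (wl 0) (Q 0) \<le> Lr"
proof (rule LIMSEQ_le)
  show "(\<lambda>k. sum (wk (rr k) 0) (Q 0)) \<longlonglongrightarrow> sum (wl 0) (Q 0)"
    by (intro tendsto_sum wl_lim)
  show "(\<lambda>k. Lr + inverse (real (Suc k))) \<longlonglongrightarrow> Lr"
    using tendsto_add[OF tendsto_const LIMSEQ_inverse_real_of_nat, of Lr] by simp
  show "\<exists>N. \<forall>n\<ge>N. sum (wk (rr n) 0) (Q 0) \<le> Lr + inverse (real (Suc n))"
  proof (intro exI allI impI)
    fix n :: nat
    have "n \<le> rr n" by (rule seq_suble[OF rr(1)])
    then have "inverse (real (Suc (rr n))) \<le> inverse (real (Suc n))"
      by (intro le_imp_inverse_le) auto
    then show "sum (wk (rr n) 0) (Q 0) \<le> Lr + inverse (real (Suc n))"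
      using wk_total[of "rr n"] by linarith
  qed
qed

lemma wl_cov: assumes "x \<in> K"
  shows "1 \<le> sum (wl m) {p\<in>Q m. x - p \<in> thick T (real DIM('a) / 2^m)}"
proof -
  define a where "a = real DIM('a) / 2^m"
  define d where "d j = inverse (real (Suc j))" for j :: nat
  have dmono: "d k \<le> d j" if "j \<le> k" for j k
    unfolding d_def using that by (intro le_imp_inverse_le) auto
  have dnn: "0 \<le> d j" for j by (simp add: d_def)
  have step1: "1 \<le> (\<Sum>p\<in>Q m. if x - p \<in> thick T (d j + a) then wl m p else 0)" for j
  proof (rule LIMSEQ_le_const)
    show "(\<lambda>k. \<Sum>p\<in>Q m. if x - p \<in> thick T (d j + a) then wk (rr k) m p else 0)
        \<longlonglongrightarrow> (\<Sum>p\<in>Q m. if x - p \<in> thick T (d j + a) then wl m p else 0)"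
      by (intro tendsto_sum) (auto intro: wl_lim)
    show "\<exists>N. \<forall>k\<ge>N. 1 \<le> (\<Sum>p\<in>Q m. if x - p \<in> thick T (d j + a) then wk (rr k) m p else 0)"
    proof (intro exI allI impI)
      fix k assume "j \<le> k"
      then have "d (rr k) \<le> d j" using seq_suble[OF rr(1), of k] dmono[of j "rr k"] by simp
      then have sub: "thick T (d (rr k) + a) \<subseteq> thick T (d j + a)" by (intro thick_mono) simp
      have "1 \<le> sum (wk (rr k) m) {p\<in>Q m. x - p \<in> thick T (d (rr k) + a)}"
        using wk_cov[OF assms, of "rr k" m] by (simp add: d_def a_def)
      also have "\<dots> = (\<Sum>p\<in>Q m. if x - p \<in> thick T (d (rr k) + a) then wk (rr k) m p else 0)"
        by (simp add: sum.inter_filter[OF finQ])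
      also have "\<dots> \<le> (\<Sum>p\<in>Q m. if x - p \<in> thick T (d j + a) then wk (rr k) m p else 0)"
        using sub by (intro sum_mono) (auto simp: wk_nn)
      finally show "1 \<le> (\<Sum>p\<in>Q m. if x - p \<in> thick T (d j + a) then wk (rr k) m p else 0)" .
    qed
  qed
  have step2: "(\<lambda>j. \<Sum>p\<in>Q m. if x - p \<in> thick T (d j + a) then wl m p else 0)
      \<longlonglongrightarrow> (\<Sum>p\<in>Q m. if x - p \<in> thick T a then wl m p else 0)"
  proof (intro tendsto_sum)
    fix p assume "p \<in> Q m"
    show "(\<lambda>j. if x - p \<in> thick T (d j + a) then wl m p else 0) \<longlonglongrightarrow> (if x - p \<in> thick T a then wl m p else 0)"
    proof (cases "x - p \<in> thick T a")
      case True
      then have "x - p \<in> thick T (d j + a)" for j using thick_mono[of a "d j + a" T] dnn[of j] by auto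
      then show ?thesis using True by simp
    next
      case False
      have "d \<longlonglongrightarrow> 0" unfolding d_def by (rule LIMSEQ_inverse_real_of_nat)
      then have "\<not> (\<forall>j. x - p \<in> thick T (a + d j))" using thick_lim[OF cT, of "x - p" a d] False by blast
      then obtain j0 where j0: "x - p \<notin> thick T (a + d j0)" by blast
      have "eventually (\<lambda>j. (if x - p \<in> thick T (d j + a) then wl m p else 0) = 0) sequentially"
        unfolding eventually_sequentially
      proof (intro exI allI impI)
        fix j assume "j0 \<le> j"
        then have "thick T (d j + a) \<subseteq> thick T (a + d j0)" using dmono by (intro thick_mono) auto
        then show "(if x - p \<in> thick T (d j + a) then wl m p else 0) = 0" using j0 by auto
      qed
      then show ?thesis using False by (simp add: tendsto_eventually)
    qed
  qed
  have "1 \<le> (\<Sum>p\<in>Q m. if x - p \<in> thick T a then wl m p else 0)"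
    by (rule LIMSEQ_le_const[OF step2]) (use step1 in blast)
  then show ?thesis by (simp add: sum.inter_filter[OF finQ] a_def)
qed

end




context approx
begin

lemma exists_measure:
  "\<exists>M. regular_borel_measure M \<and> (\<forall>x. indicator K x \<le> \<integral>\<^sup>+ y. indicator T (x - y) \<partial>M)
      \<and> emeasure M (space M) \<le> ennreal Lr"
proof -
  interpret dt: dtree Q dq wl "real DIM('a)"
  proof
    show "finite (Q m)" for m by (rule finQ)
    show "dq m p \<in> Q m" if "p \<in> Q (Suc m)" for p m using qQ that .
    show "0 \<le> wl m p" for m p by (rule wl_nn)
    show "wl m p = sum (wl (Suc m)) {p' \<in> Q (Suc m). dq m p' = p}" if "p \<in> Q m" for p m
      using wl_cons that .
    show "dist (dq m p) p \<le> real DIM('a) / 2 ^ m" for m and p :: 'a by (rule dq_dist)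
    show "0 \<le> real DIM('a)" by simp
  qed
  define M0 where "M0 = sum (wl 0) (Q 0)"
  have M0nn: "0 \<le> M0" unfolding M0_def by (intro sum_nonneg wl_nn)
  have M0le: "M0 \<le> Lr" unfolding M0_def by (rule wl_total)
  define \<Lambda> where "\<Lambda> = density lborel (indicator {0..<M0} :: real \<Rightarrow> ennreal)"
  define M where "M = distr \<Lambda> borel dt.Y"
  have Ymeas[measurable]: "dt.Y \<in> borel_measurable borel" by (rule dt.Y_meas)
  have Ymeas': "dt.Y \<in> measurable \<Lambda> borel"
    using Ymeas measurable_cong_sets[of \<Lambda> borel borel borel] unfolding \<Lambda>_def by simp
  have sM: "sets M = sets borel" unfolding M_def by simp
  have spM: "space M = UNIV" using sets_eq_imp_space_eq[OF sM] by simp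
  have emM: "emeasure M A = emeasure lborel ({0..<M0} \<inter> dt.Y -` A)" if A[measurable]: "A \<in> sets borel" for A
  proof -
    have pre: "dt.Y -` A \<in> sets borel" using measurable_sets[OF Ymeas A] by simp
    have "emeasure M A = emeasure \<Lambda> (dt.Y -` A \<inter> space \<Lambda>)"
      unfolding M_def by (rule emeasure_distr[OF Ymeas' A])
    also have "dt.Y -` A \<inter> space \<Lambda> = dt.Y -` A" unfolding \<Lambda>_def by simp
    also have "emeasure \<Lambda> (dt.Y -` A) = (\<integral>\<^sup>+ x. indicator {0..<M0} x * indicator (dt.Y -` A) x \<partial>lborel)"
      unfolding \<Lambda>_def by (rule emeasure_density) (auto simp: pre)
    also have "\<dots> = (\<integral>\<^sup>+ x. indicator ({0..<M0} \<inter> dt.Y -` A) x \<partial>lborel)"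
      by (simp add: indicator_inter_arith)
    also have "\<dots> = emeasure lborel ({0..<M0} \<inter> dt.Y -` A)"
      by (rule nn_integral_indicator) (auto simp: pre)
    finally show ?thesis .
  qed
  have tot: "emeasure M (space M) = ennreal M0"
    using emM[of UNIV] M0nn by (simp add: spM)
  have reg: "regular_borel_measure M"
    by (rule finite_regular[OF sM]) (simp add: tot)
  have cov: "indicator K x \<le> \<integral>\<^sup>+ y. indicator T (x - y) \<partial>M" for x
  proof (cases "x \<in> K")
    case False then show ?thesis by simp
  next
    case True
    have Tcl: "closed T" using cT by (rule compact_imp_closed)
    have [measurable]: "T \<in> sets borel" using Tcl by simp
    define c where "c = real DIM('a)"
    have cnn: "0 \<le> c" by (simp add: c_def)
    define G where "G m = {0..<M0} \<inter> {u. x - dt.Y u \<in> thick T (3 * c / 2^m)}" for m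
    have thick_sets[measurable]: "thick T r \<in> sets borel" for r using thick_closed[OF cT] by simp
    have Gsets: "G m \<in> sets lborel" for m unfolding G_def by measurable
    have Gdec: "decseq G"
      unfolding decseq_def G_def
    proof (intro allI impI subsetI)
      fix m n :: nat and u assume "m \<le> n" and u: "u \<in> {0..<M0} \<inter> {u. x - dt.Y u \<in> thick T (3 * c / 2 ^ n)}"
      have "(2::real)^m \<le> 2^n" using \<open>m \<le> n\<close> by (simp add: power_increasing)
      then have "3 * c / 2^n \<le> 3 * c / 2^m" using cnn by (intro divide_left_mono) auto
      then show "u \<in> {0..<M0} \<inter> {u. x - dt.Y u \<in> thick T (3 * c / 2 ^ m)}"
        using u thick_mono by blast
    qed
    have Gfin: "emeasure lborel (G m) \<noteq> \<infinity>" for m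
    proof -
      have "emeasure lborel (G m) \<le> emeasure lborel {0..<M0}" by (rule emeasure_mono) (auto simp: G_def)
      then show ?thesis using M0nn by (auto simp: top_unique)
    qed
    have Ginter: "(\<Inter>m. G m) = {0..<M0} \<inter> dt.Y -` {y. x - y \<in> T}"
    proof (intro equalityI subsetI)
      fix u assume u: "u \<in> (\<Inter>m. G m)"
      have e: "(\<lambda>m. 3 * c / 2^m) \<longlonglongrightarrow> 0"
        by (intro tendsto_divide_0[OF tendsto_const]) (simp add: filterlim_realpow_sequentially_gt1)
      have "x - dt.Y u \<in> thick T (0 + 3 * c / 2^m)" for m using u by (auto simp: G_def)
      then have "x - dt.Y u \<in> thick T 0" by (rule thick_lim[OF cT _ e])
      then show "u \<in> {0..<M0} \<inter> dt.Y -` {y. x - y \<in> T}" using u thick_zero[OF Tcl] by (auto simp: G_def)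
    next
      fix u assume u: "u \<in> {0..<M0} \<inter> dt.Y -` {y. x - y \<in> T}"
      have "T \<subseteq> thick T r" if "0 \<le> r" for r unfolding thick_def using that by force
      moreover have "0 \<le> 3 * c / 2^m" for m :: nat using cnn by simp
      ultimately show "u \<in> (\<Inter>m. G m)" using u unfolding G_def by blast
    qed
    have Gge: "1 \<le> emeasure lborel (G m)" for m
    proof -
      let ?A = "{p. x - p \<in> thick T (c / 2^m)}"
      have "1 \<le> ennreal (sum (wl m) (Q m \<inter> ?A))"
        using wl_cov[OF True, of m] by (simp add: c_def Int_def)
      also have "\<dots> = emeasure lborel {u\<in>{0..<sum (wl 0) (Q 0)}. dt.Ym m u \<in> ?A}"
        by (rule dt.Ym_measure[symmetric])
      also have "\<dots> \<le> emeasure lborel (G m)"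
      proof (rule emeasure_mono[OF _ Gsets])
        show "{u\<in>{0..<sum (wl 0) (Q 0)}. dt.Ym m u \<in> ?A} \<subseteq> G m"
        proof
          fix u assume u: "u \<in> {u\<in>{0..<sum (wl 0) (Q 0)}. dt.Ym m u \<in> ?A}"
          then have u0: "u \<in> {0..<sum (wl 0) (Q 0)}" by simp
          have "dist (x - dt.Ym m u) (x - dt.Y u) \<le> 2 * c / 2^m"
            using dt.Y_dist[OF u0, of m] by (simp add: dist_norm norm_minus_commute c_def)
          then have "x - dt.Y u \<in> thick T (c / 2^m + 2 * c / 2^m)" using u thick_add by blast
          moreover have "c / 2^m + 2 * c / 2^m = 3 * c / 2^m" by (simp add: field_simps)
          ultimately show "u \<in> G m" using u0 by (simp add: G_def M0_def)
        qed
      qed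
      finally show ?thesis .
    qed
    have "1 \<le> (INF m. emeasure lborel (G m))" using Gge by (intro INF_greatest)
    also have "\<dots> = emeasure lborel (\<Inter>m. G m)"
      by (rule INF_emeasure_decseq[OF _ Gdec Gfin]) (use Gsets in auto)
    also have "\<dots> = emeasure M {y. x - y \<in> T}"
    proof -
      have "{y. x - y \<in> T} \<in> sets borel" by measurable
      then show ?thesis using emM Ginter by simp
    qed
    also have "\<dots> = \<integral>\<^sup>+ y. indicator T (x - y) \<partial>M"
      by (rule cover_emeasure[OF sM Tcl, symmetric])
    finally show ?thesis using True by simp
  qed
  show ?thesis
    using reg cov tot M0le by (intro exI[of _ M]) (auto intro: ennreal_leI)
qed

end

lemma main_ineq:
  fixes K T :: "'a::euclidean_space set"
  assumes cK: "compact K" and cT: "compact T"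
  shows "frac_cover_number K T \<le> (SUP \<delta>\<in>{0<..}. frac_cover_number K (thick T \<delta>))"
    (is "_ \<le> ?L")
proof (cases "?L = top")
  case True then show ?thesis by (simp only: True top_greatest)
next
  case False
  then obtain Lr where Lr: "?L = ennreal Lr" "0 \<le> Lr" by (cases ?L) auto
  define d where "d k = inverse (real (Suc k))" for k :: nat
  have "\<exists>M. regular_borel_measure M \<and> (\<forall>x. indicator K x \<le> \<integral>\<^sup>+ y. indicator (thick T (d k)) (x - y) \<partial>M)
        \<and> emeasure M (space M) \<le> ennreal (Lr + d k)" for k
  proof -
    have dpos: "0 < d k" by (simp add: d_def)
    have "frac_cover_number K (thick T (d k)) \<le> ?L" using dpos by (intro SUP_upper) simp
    also have "\<dots> < ennreal (Lr + d k)" using Lr dpos by (simp add: ennreal_less_iff)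
    finally have "frac_cover_number K (thick T (d k)) < ennreal (Lr + d k)" .
    then obtain M where "M \<in> {M. regular_borel_measure M \<and>
               (\<forall>x. (indicator K x :: ennreal) \<le> (\<integral>\<^sup>+ y. indicator (thick T (d k)) (x - y) \<partial>M))}"
      "emeasure M (space M) < ennreal (Lr + d k)"
      unfolding frac_cover_number_def INF_less_iff by blast
    then show ?thesis by (intro exI[of _ M]) auto
  qed
  then have "\<exists>\<mu>. \<forall>k. regular_borel_measure (\<mu> k) \<and> (\<forall>x. indicator K x \<le> \<integral>\<^sup>+ y. indicator (thick T (d k)) (x - y) \<partial>\<mu> k)
        \<and> emeasure (\<mu> k) (space (\<mu> k)) \<le> ennreal (Lr + d k)"
    by (intro choice allI)
  then obtain \<mu> where \<mu>: "\<And>k. regular_borel_measure (\<mu> k)"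
    "\<And>k x. indicator K x \<le> \<integral>\<^sup>+ y. indicator (thick T (d k)) (x - y) \<partial>\<mu> k"
    "\<And>k. emeasure (\<mu> k) (space (\<mu> k)) \<le> ennreal (Lr + d k)" by blast
  interpret ap: approx K T \<mu> Lr
  proof
    show "compact K" "compact T" "0 \<le> Lr" using cK cT Lr by auto
    show "sets (\<mu> k) = sets borel" for k using \<mu>(1)[of k] by (simp add: regular_borel_measure_def)
    show "emeasure (\<mu> k) (space (\<mu> k)) \<le> ennreal (Lr + inverse (real (Suc k)))" for k
      using \<mu>(3)[of k] by (simp add: d_def)
    show "indicator K x \<le> \<integral>\<^sup>+ y. indicator (thick T (inverse (real (Suc k)))) (x - y) \<partial>\<mu> k" for x k
      using \<mu>(2)[of x k] by (simp add: d_def)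
  qed
  obtain M where M: "regular_borel_measure M" "\<forall>x. indicator K x \<le> \<integral>\<^sup>+ y. indicator T (x - y) \<partial>M"
    "emeasure M (space M) \<le> ennreal Lr" using ap.exists_measure by blast
  have "frac_cover_number K T \<le> emeasure M (space M)" using M by (intro fcn_le) auto
  also have "\<dots> \<le> ?L" using M(3) Lr by simp
  finally show ?thesis .
qed

theorem proposition2p4:
  fixes K T :: "'a::euclidean_space set"
  assumes "compact K" and "compact T" and "interior T \<noteq> {}"
  shows "((\<lambda>\<delta>::real. frac_cover_number K {t + \<delta> *\<^sub>R b | t b. t \<in> T \<and> b \<in> cball 0 1})
           \<longlongrightarrow> frac_cover_number K T) (at_right 0)"
proof (rule order_tendstoI)
  let ?N = "\<lambda>\<delta>. frac_cover_number K (thick T \<delta>)"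
  have feq: "frac_cover_number K {t + \<delta> *\<^sub>R b | t b. t \<in> T \<and> b \<in> cball 0 1} = ?N \<delta>" if "0 < \<delta>" for \<delta>
    using thick_eq[OF that, of T] by simp
  have Tsub: "T \<subseteq> thick T r" if "0 \<le> r" for r unfolding thick_def using that by force
  fix a assume a: "a < frac_cover_number K T"
  then have "a < (SUP \<delta>\<in>{0<..}. ?N \<delta>)" using main_ineq[OF assms(1,2)] by (rule less_le_trans)
  then obtain \<delta>0 where d0: "0 < \<delta>0" "a < ?N \<delta>0" by (auto simp: less_SUP_iff)
  show "eventually (\<lambda>\<delta>. a < frac_cover_number K {t + \<delta> *\<^sub>R b | t b. t \<in> T \<and> b \<in> cball 0 1}) (at_right 0)"
    unfolding eventually_at_right_field
  proof (intro exI[of _ \<delta>0] conjI allI impI)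
    fix y :: real assume "0 < y" "y < \<delta>0"
    then have "?N \<delta>0 \<le> ?N y" by (intro fcn_mono thick_mono) simp
    then show "a < frac_cover_number K {t + y *\<^sub>R b | t b. t \<in> T \<and> b \<in> cball 0 1}"
      using d0 feq[OF \<open>0 < y\<close>] by simp
  qed (rule d0(1))
next
  let ?N = "\<lambda>\<delta>. frac_cover_number K (thick T \<delta>)"
  have feq: "frac_cover_number K {t + \<delta> *\<^sub>R b | t b. t \<in> T \<and> b \<in> cball 0 1} = ?N \<delta>" if "0 < \<delta>" for \<delta>
    using thick_eq[OF that, of T] by simp
  have Tsub: "T \<subseteq> thick T r" if "0 \<le> r" for r unfolding thick_def using that by force
  fix a assume a: "frac_cover_number K T < a"
  show "eventually (\<lambda>\<delta>. frac_cover_number K {t + \<delta> *\<^sub>R b | t b. t \<in> T \<and> b \<in> cball 0 1} < a) (at_right 0)"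
    unfolding eventually_at_right_field
  proof (intro exI[of _ 1] conjI allI impI)
    fix y :: real assume "0 < y" "y < 1"
    then have "?N y \<le> frac_cover_number K T" by (intro fcn_mono Tsub) simp
    then show "frac_cover_number K {t + y *\<^sub>R b | t b. t \<in> T \<and> b \<in> cball 0 1} < a"
      using a feq[OF \<open>0 < y\<close>] by simp
  qed simp
qed


end
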